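(* In both the single-hop and the multihop version of Peg Duotaire, for all words $x,y\in\{0,1\}^*$ and every integer $m\ge 0$, the position $x\,0(01)^m00\,y$ is equivalent to the disjunctive sum of the positions $x0$ and $0y$ (the two parts can never interact); in particular \[ G\bigl(x\,0(01)^m00\,y\bigr) = G(x0)\oplus G(0y). \]
   Context: Peg Duotaire is an impartial two-player game played on the infinite line of sites indexed by $\mathbb{Z}$, each site holding a peg or being a hole, with finitely many pegs. A word $w\in\{0,1\}^*$ denotes the position in which $w$ is written on consecutive sites ($1$ = peg, $0$ = hole) and all other sites are holes. A hop: for a peg at site $i$, a peg at site $i+d$ and a hole at site $i+2d$ ($d=\pm1$), move the peg from $i$ to $i+2d$ and remove the peg at $i+d$. In the single-hop version, a move is a single hop; in the multihop version, a move is a sequence of one or more hops all performed by the same peg. Players alternate moves; a player unable to move loses. $G(w)$ denotes the nim-value (Grundy number) of the position $w$: the least nonnegative integer not among the nim-values of positions reachable in one move. $\oplus$ is bitwise exclusive-or of nonnegative integers (nim-sum); the nim-value of a disjunctive sum of games is the nim-sum of their nim-values. *)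

theory Defs
  imports Main
begin

text \<open>A position is the (finite) set of sites in the integers holding a peg.\<close>
type_synonym position = "int set"

text \<open>A word (True = peg, False = hole) written on sites 0,1,...,length w - 1.\<close>
definition word_pos :: "bool list \<Rightarrow> position" where
  "word_pos w = {int i | i. i < length w \<and> w ! i}"

definition hop :: "position \<Rightarrow> int \<Rightarrow> int \<Rightarrow> position \<Rightarrow> bool" where
  "hop P i j Q \<longleftrightarrow> (\<exists>d::int. (d = 1 \<or> d = -1) \<and> i \<in> P \<and> i + d \<in> P \<and> i + 2*d \<notin> P
      \<and> j = i + 2*d \<and> Q = (P - {i, i + d}) \<union> {i + 2*d})"

inductive multihop :: "position \<Rightarrow> int \<Rightarrow> position \<Rightarrow> bool" where
  one: "hop P i j Q \<Longrightarrow> multihop P i Q"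
| more: "hop P i j Q \<Longrightarrow> multihop Q j R \<Longrightarrow> multihop P i R"

datatype version = SingleHop | MultiHop

definition moves :: "version \<Rightarrow> position \<Rightarrow> position set" where
  "moves v P = (case v of
      SingleHop \<Rightarrow> {Q. \<exists>i j. hop P i j Q}
    | MultiHop \<Rightarrow> {Q. \<exists>i. multihop P i Q})"

definition mex :: "nat set \<Rightarrow> nat" where
  "mex S = (LEAST n. n \<notin> S)"

text \<open>Nim-value computed with fuel: every move removes at least one peg, so from a
  finite position P the game lasts at most card P moves; fuel card P suffices.\<close>
fun grundy_fuel :: "version \<Rightarrow> nat \<Rightarrow> position \<Rightarrow> nat" where
  "grundy_fuel v 0 P = 0"
| "grundy_fuel v (Suc n) P = mex (grundy_fuel v n ` moves v P)"

definition grundy :: "version \<Rightarrow> position \<Rightarrow> nat" where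
  "grundy v P = grundy_fuel v (card P) P"

definition G :: "version \<Rightarrow> bool list \<Rightarrow> nat" where
  "G v w = grundy v (word_pos w)"

end

theory Submission
  imports Defs Complex_Main
begin

unbundle bit_operations_syntax

lemma xor_cancel_nat: "((a::nat) XOR b) XOR b = a"
  by (simp add: xor.assoc)

lemma xor_lt:
  fixes a b c :: nat
  shows "c < a XOR b \<Longrightarrow> c XOR b < a \<or> c XOR a < b"
proof (induction "a + b" arbitrary: a b c rule: less_induct)
  case less
  define A where "A = a div 2"
  define B where "B = b div 2"
  define C where "C = c div 2"
  have ra: "a XOR b = of_bool (odd a \<noteq> odd b) + 2 * (A XOR B)"
    unfolding A_def B_def by (rule xor_nat_rec)
  have rcb: "c XOR b = of_bool (odd c \<noteq> odd b) + 2 * (C XOR B)"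
    unfolding C_def B_def by (rule xor_nat_rec)
  have rca: "c XOR a = of_bool (odd c \<noteq> odd a) + 2 * (C XOR A)"
    unfolding C_def A_def by (rule xor_nat_rec)
  have ab0: "a + b > 0" using less.prems by (cases "a = 0"; cases "b = 0") auto
  have lt: "A + B < a + b" unfolding A_def B_def using ab0 by auto
  have cc: "c = c mod 2 + 2 * C" unfolding C_def by simp
  have aa: "a = a mod 2 + 2 * A" unfolding A_def by simp
  have bb: "b = b mod 2 + 2 * B" unfolding B_def by simp
  show ?case
  proof (cases "C < A XOR B")
    case True
    from less.hyps[OF lt True] have "C XOR B < A \<or> C XOR A < B" .
    then show ?thesis
    proof
      assume "C XOR B < A" then have "c XOR b < a" using rcb aa by simp
      then show ?thesis ..
    next
      assume "C XOR A < B" then have "c XOR a < b" using rca bb by simp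
      then show ?thesis ..
    qed
  next
    case False
    have "c < of_bool (odd a \<noteq> odd b) + 2 * (A XOR B)" using less.prems ra by simp
    then have Ceq: "C = A XOR B" using False cc by (cases "odd a \<noteq> odd b") auto
    have ev: "even c \<and> (odd a \<noteq> odd b)"
    proof -
      have m: "c mod 2 < of_bool (odd a \<noteq> odd b)" using less.prems ra cc Ceq by linarith
      then have "odd a \<noteq> odd b" by (cases "odd a \<noteq> odd b") auto
      moreover from m have "c mod 2 = 0" using \<open>odd a \<noteq> odd b\<close> by simp
      ultimately show ?thesis by auto
    qed
    have "C XOR B = A" using Ceq by (simp add: xor.assoc)
    moreover have "C XOR A = B" using Ceq by (metis xor.commute xor_cancel_nat)
    moreover have "odd a \<Longrightarrow> a mod 2 = 1" "odd b \<Longrightarrow> b mod 2 = 1" by presburger+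
    ultimately show ?thesis using ev rcb rca aa bb by (cases "odd a") auto
  qed
qed

lemma mex_eq: "(a::nat) \<notin> S \<Longrightarrow> (\<forall>k<a. k \<in> S) \<Longrightarrow> mex S = a"
  unfolding mex_def by (rule Least_equality) (auto simp: not_less[symmetric])

lemma mex_props: assumes "(N::nat) \<notin> S" shows "mex S \<notin> S" "\<And>k. k < mex S \<Longrightarrow> k \<in> S" "mex S \<le> N"
proof -
  show "mex S \<notin> S" unfolding mex_def by (rule LeastI[of "\<lambda>n. n \<notin> S" N]) (rule assms)
  show "\<And>k. k < mex S \<Longrightarrow> k \<in> S" unfolding mex_def using not_less_Least by blast
  show "mex S \<le> N" unfolding mex_def by (rule Least_le) (rule assms)
qed

lemma mex_xor:
  fixes a b :: nat
  assumes "a \<notin> S" "\<forall>k<a. k \<in> S" "b \<notin> T" "\<forall>k<b. k \<in> T"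
  shows "mex ((\<lambda>s. s XOR b) ` S \<union> (\<lambda>t. a XOR t) ` T) = a XOR b"
proof (rule mex_eq)
  show "a XOR b \<notin> (\<lambda>s. s XOR b) ` S \<union> (\<lambda>t. a XOR t) ` T"
  proof
    assume "a XOR b \<in> (\<lambda>s. s XOR b) ` S \<union> (\<lambda>t. a XOR t) ` T"
    then obtain s where "s \<in> S \<and> a XOR b = s XOR b \<or> s \<in> T \<and> a XOR b = a XOR s" by auto
    then show False using assms
      by (metis xor_cancel_nat xor.commute)
  qed
  show "\<forall>k<a XOR b. k \<in> (\<lambda>s. s XOR b) ` S \<union> (\<lambda>t. a XOR t) ` T"
  proof (intro allI impI)
    fix k assume "k < a XOR b"
    from xor_lt[OF this] show "k \<in> (\<lambda>s. s XOR b) ` S \<union> (\<lambda>t. a XOR t) ` T"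
    proof
      assume "k XOR b < a"
      then have "k XOR b \<in> S" using assms by auto
      moreover have "k = (k XOR b) XOR b" by (simp add: xor_cancel_nat)
      ultimately show ?thesis by blast
    next
      assume "k XOR a < b"
      then have "k XOR a \<in> T" using assms by auto
      moreover have "k = a XOR (k XOR a)" by (metis xor.commute xor_cancel_nat)
      ultimately show ?thesis by blast
    qed
  qed
qed

lemma hop_basic:
  assumes "hop P i j Q" "finite P"
  shows "finite Q \<and> card Q < card P \<and> i \<in> P \<and> j \<in> Q \<and> j \<notin> P"
proof -
  obtain d where d: "d = 1 \<or> d = -1" "i \<in> P" "i + d \<in> P" "i + 2*d \<notin> P" "j = i + 2*d"
    "Q = (P - {i, i + d}) \<union> {i + 2*d}" using assms(1) unfolding hop_def by blast
  have ne: "i \<noteq> i + d" using d(1) by auto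
  have Q: "Q = insert (i+2*d) (P - {i, i+d})" using d(6) by auto
  have f: "finite (P - {i, i+d})" using assms(2) by auto
  have "card (P - {i, i+d}) = card P - 2" using d(2,3) ne assms(2)
    by (simp add: card_Diff_subset)
  moreover have "card P \<ge> 2" using d(2,3) ne assms(2)
    by (metis card_2_iff empty_subsetI insert_subset card_mono)
  moreover have "i + 2*d \<notin> P - {i, i+d}" using d(4) by auto
  ultimately have "card Q = card P - 1" using Q f by simp
  then show ?thesis using Q f d \<open>card P \<ge> 2\<close> by auto
qed

lemma multihop_basic:
  assumes "multihop P i Q" "finite P"
  shows "finite Q \<and> card Q < card P \<and> i \<in> P"
  using assms
proof (induction rule: multihop.induct)
  case (one P i j Q) then show ?case using hop_basic by blast
next
  case (more P i j Q R)
  then show ?case using hop_basic by (metis order.strict_trans)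
qed

lemma moves_basic:
  assumes "Q \<in> moves v P" "finite P"
  shows "finite Q \<and> card Q < card P"
  using assms hop_basic multihop_basic unfolding moves_def
  by (cases v) auto

lemma gf_stable:
  "finite P \<Longrightarrow> card P \<le> k \<Longrightarrow> card P \<le> k' \<Longrightarrow> grundy_fuel v k P = grundy_fuel v k' P"
proof (induction k arbitrary: k' P)
  case 0
  then have "P = {}" by auto
  then have "moves v P = {}" unfolding moves_def hop_def
    by (cases v) (auto elim: multihop.cases simp: hop_def)
  then show ?case by (cases k') (auto simp: mex_def)
next
  case (Suc k)
  show ?case
  proof (cases k')
    case 0
    then have "P = {}" using Suc by auto
    then have "moves v P = {}" unfolding moves_def hop_def
      by (cases v) (auto elim: multihop.cases simp: hop_def)
    then show ?thesis using 0 by (auto simp: mex_def)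
  next
    case (Suc k'')
    have "grundy_fuel v k ` moves v P = grundy_fuel v k'' ` moves v P"
    proof (rule image_cong[OF refl])
      fix Q assume "Q \<in> moves v P"
      from moves_basic[OF this \<open>finite P\<close>] show "grundy_fuel v k Q = grundy_fuel v k'' Q"
        using Suc.IH Suc.prems \<open>k' = Suc k''\<close> by auto
    qed
    then show ?thesis using Suc by simp
  qed
qed

lemma grundy_eq:
  assumes "finite P" shows "grundy v P = mex (grundy v ` moves v P)"
proof -
  have "grundy_fuel v (Suc (card P)) P = grundy_fuel v (card P) P"
    by (rule gf_stable) (use assms in auto)
  then have "grundy_fuel v (Suc (card P)) P = grundy v P" unfolding grundy_def .
  moreover have "grundy_fuel v (card P) ` moves v P = grundy v ` moves v P"
  proof (rule image_cong[OF refl])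
    fix Q assume "Q \<in> moves v P"
    from moves_basic[OF this assms] show "grundy_fuel v (card P) Q = grundy v Q"
      unfolding grundy_def using gf_stable by auto
  qed
  ultimately show ?thesis by simp
qed

lemma grundy_le: "finite P \<Longrightarrow> grundy v P \<le> card P"
proof (induction "card P" arbitrary: P rule: less_induct)
  case less
  have "card P \<notin> grundy v ` moves v P"
  proof
    assume "card P \<in> grundy v ` moves v P"
    then obtain Q where "Q \<in> moves v P" "card P = grundy v Q" by auto
    with moves_basic[OF this(1) less.prems] less.hyps show False by fastforce
  qed
  then show ?case using grundy_eq[OF less.prems] mex_props(3) by metis
qed

lemma grundy_mex:
  assumes "finite P"
  shows "grundy v P \<notin> grundy v ` moves v P" "\<And>k. k < grundy v P \<Longrightarrow> k \<in> grundy v ` moves v P"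
proof -
  have "card P \<notin> grundy v ` moves v P"
  proof
    assume "card P \<in> grundy v ` moves v P"
    then obtain Q where "Q \<in> moves v P" "card P = grundy v Q" by auto
    with moves_basic[OF this(1) assms] grundy_le[of Q v] show False by fastforce
  qed
  then show "grundy v P \<notin> grundy v ` moves v P" "\<And>k. k < grundy v P \<Longrightarrow> k \<in> grundy v ` moves v P"
    using grundy_eq[OF assms] mex_props by metis+
qed

definition sh :: "int \<Rightarrow> position \<Rightarrow> position" where "sh t P = (+) t ` P"

lemma sh_sh[simp]: "sh s (sh t P) = sh (s + t) P"
  unfolding sh_def by (auto simp: image_image add.assoc)

lemma sh_0[simp]: "sh 0 P = P" unfolding sh_def by simp

lemma hop_shift: "hop P i j Q \<Longrightarrow> hop (sh t P) (i+t) (j+t) (sh t Q)"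
  unfolding hop_def sh_def
proof (elim exE conjE)
  fix d assume d: "d = 1 \<or> d = -1" "i \<in> P" "i + d \<in> P" "i + 2*d \<notin> P" "j = i + 2*d"
    "Q = (P - {i, i + d}) \<union> {i + 2*d}"
  show "\<exists>d. (d = 1 \<or> d = - 1) \<and> i + t \<in> (+) t ` P \<and> i + t + d \<in> (+) t ` P \<and>
         i + t + 2 * d \<notin> (+) t ` P \<and> j + t = i + t + 2 * d \<and>
         (+) t ` Q = (+) t ` P - {i + t, i + t + d} \<union> {i + t + 2 * d}"
  proof (intro exI[of _ d] conjI)
    show "(+) t ` Q = (+) t ` P - {i + t, i + t + d} \<union> {i + t + 2 * d}"
      using d(6) by (auto simp: image_iff algebra_simps)
  qed (use d in \<open>auto simp: image_iff algebra_simps\<close>)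
qed

lemma multihop_shift: "multihop P i Q \<Longrightarrow> multihop (sh t P) (i+t) (sh t Q)"
proof (induction rule: multihop.induct)
  case (one P i j Q) then show ?case using hop_shift multihop.one by blast
next
  case (more P i j Q R) then show ?case using hop_shift multihop.more by blast
qed

lemma moves_shift_sub: "sh t ` moves v P \<subseteq> moves v (sh t P)"
  unfolding moves_def by (cases v) (auto, (meson hop_shift multihop_shift)+)

lemma moves_shift: "moves v (sh t P) = sh t ` moves v P"
proof
  show "sh t ` moves v P \<subseteq> moves v (sh t P)" by (rule moves_shift_sub)
  have "sh (-t) ` moves v (sh t P) \<subseteq> moves v P"
    using moves_shift_sub[of "-t" v "sh t P"] by simp
  then have "sh t ` sh (-t) ` moves v (sh t P) \<subseteq> sh t ` moves v P" by blast
  moreover have "sh t ` sh (-t) ` X = X" for X by (simp add: image_image)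
  ultimately show "moves v (sh t P) \<subseteq> sh t ` moves v P" by simp
qed

lemma card_sh[simp]: "card (sh t P) = card P"
  unfolding sh_def by (simp add: card_image)

lemma gf_shift: "grundy_fuel v k (sh t P) = grundy_fuel v k P"
proof (induction k arbitrary: P)
  case (Suc k)
  then show ?case by (simp add: moves_shift image_image)
qed simp

lemma grundy_shift: "grundy v (sh t P) = grundy v P"
  unfolding grundy_def by (simp add: gf_shift)

definition sg :: real where "sg = (sqrt 5 - 1) / 2"

lemma sg_pos: "0 < sg" and sg_lt1: "sg < 1" and sg_eq: "sg * sg + sg = 1"
proof -
  have s5: "sqrt 5 * sqrt 5 = (5::real)" by simp
  have "sqrt 5 > (1::real)" by simp
  moreover have "sqrt 5 < (3::real)"
  proof (rule ccontr)
    assume "\<not> sqrt 5 < (3::real)"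
    then have "3 * 3 \<le> sqrt 5 * sqrt (5::real)" by (intro mult_mono) auto
    then show False by simp
  qed
  ultimately show "0 < sg" "sg < 1" unfolding sg_def by auto
  show "sg * sg + sg = 1" unfolding sg_def by (simp add: algebra_simps s5) (simp add: field_simps)
qed

definition W :: "int \<Rightarrow> int \<Rightarrow> position \<Rightarrow> real" where
  "W e c P = (\<Sum>i\<in>P. sg powi (e * (c - i)))"

definition Inv :: "int \<Rightarrow> int \<Rightarrow> position \<Rightarrow> bool" where
  "Inv e c P \<longleftrightarrow> finite P \<and> W e c P < 1 / sg"

lemma key_ineq:
  assumes "t = 1 \<or> t = -1"
  shows "sg powi (a - 2*t) \<le> sg powi a + sg powi (a - t)"
proof -
  have nz: "sg \<noteq> 0" using sg_pos by simp
  from assms show ?thesis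
  proof
    assume t: "t = 1"
    have "sg powi a = sg powi (a - 2) * sg powi 2" using power_int_add[of sg "a-2" 2] nz by simp
    moreover have "sg powi (a - 1) = sg powi (a - 2) * sg powi 1" using power_int_add[of sg "a-2" 1] nz by simp
    ultimately have "sg powi a + sg powi (a - t) = sg powi (a - 2) * (sg * sg + sg)"
      using t by (simp add: algebra_simps power2_eq_square)
    then show ?thesis using t sg_eq by simp
  next
    assume t: "t = -1"
    have "sg powi (a + 2) = sg powi a * sg powi 2" using power_int_add[of sg a 2] nz by simp
    moreover have "sg powi 2 \<le> 1" using sg_pos sg_lt1 by (simp add: power2_eq_square mult_le_one)
    moreover have "0 \<le> sg powi a" "0 \<le> sg powi (a + 1)" using sg_pos by auto
    ultimately have "sg powi (a+2) \<le> sg powi a" by (simp add: mult_left_le)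
    moreover have "sg powi (a - 2*t) = sg powi (a+2)" "sg powi (a - t) = sg powi (a+1)" using t by simp_all
    ultimately show ?thesis using \<open>0 \<le> sg powi (a + 1)\<close> by linarith
  qed
qed

lemma hop_W:
  assumes "hop P i j Q" "finite P" "e = 1 \<or> e = -1"
  shows "W e c Q \<le> W e c P"
proof -
  obtain d where d: "d = 1 \<or> d = -1" "i \<in> P" "i + d \<in> P" "i + 2*d \<notin> P" "j = i + 2*d"
    "Q = (P - {i, i + d}) \<union> {i + 2*d}" using assms(1) unfolding hop_def by blast
  define R where "R = P - {i, i+d}"
  define w where "w k = sg powi (e * (c - k))" for k
  have ne: "i \<noteq> i + d" using d(1) by auto
  have fR: "finite R" using assms(2) R_def by auto
  have P: "P = insert i (insert (i+d) R)" using d R_def by auto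
  have Q: "Q = insert (i+2*d) R" using d(6) R_def by auto
  have WP: "W e c P = w i + w (i+d) + sum w R"
  proof -
    have "W e c P = sum w P" unfolding W_def w_def ..
    also have "\<dots> = w i + sum w (insert (i+d) R)" unfolding P
      by (rule sum.insert) (use fR ne R_def in auto)
    also have "sum w (insert (i+d) R) = w (i+d) + sum w R"
      by (rule sum.insert) (use fR R_def in auto)
    finally show ?thesis by simp
  qed
  have WQ: "W e c Q = w (i+2*d) + sum w R"
  proof -
    have "W e c Q = sum w Q" unfolding W_def w_def ..
    also have "\<dots> = w (i+2*d) + sum w R" unfolding Q
      by (rule sum.insert) (use fR d(4) R_def in auto)
    finally show ?thesis .
  qed
  have t: "e*d = 1 \<or> e*d = -1" using assms(3) d(1) by auto
  have "w (i+2*d) \<le> w i + w (i+d)"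
    using key_ineq[OF t, of "e*(c-i)"] unfolding w_def by (simp add: algebra_simps)
  then show ?thesis using WP WQ by simp
qed

lemma hop_Inv:
  assumes "hop P i j Q" "Inv e c P" "e = 1 \<or> e = -1"
  shows "Inv e c Q"
proof -
  have "finite P" "W e c P < 1 / sg" using assms(2) unfolding Inv_def by auto
  moreover have "finite Q" using hop_basic[OF assms(1) \<open>finite P\<close>] by blast
  moreover have "W e c Q \<le> W e c P" using hop_W[OF assms(1) \<open>finite P\<close> assms(3)] .
  ultimately show ?thesis unfolding Inv_def by linarith
qed

lemma multihop_Inv:
  assumes "multihop P i Q" "Inv e c P" "e = 1 \<or> e = -1"
  shows "Inv e c Q"
  using assms
proof (induction rule: multihop.induct)
  case (one P i j Q) then show ?case using hop_Inv by blast
next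
  case (more P i j Q R) then show ?case using hop_Inv by blast
qed

lemma moves_Inv:
  assumes "Q \<in> moves v P" "Inv e c P" "e = 1 \<or> e = -1"
  shows "Inv e c Q"
proof (cases v)
  case SingleHop
  then obtain i j where "hop P i j Q" using assms(1) unfolding moves_def by auto
  then show ?thesis using hop_Inv assms by blast
next
  case MultiHop
  then obtain i where "multihop P i Q" using assms(1) unfolding moves_def by auto
  then show ?thesis using multihop_Inv assms by blast
qed

lemma Inv_bound:
  assumes "Inv e c P" "i \<in> P"
  shows "0 \<le> e * (c - i)"
proof (rule ccontr)
  assume "\<not> 0 \<le> e * (c - i)"
  then have le: "e * (c - i) \<le> -1" by simp
  have "1 / sg = sg powi (-1)" by (simp add: power_int_minus divide_inverse)
  also have "\<dots> \<le> sg powi (e * (c - i))"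
    by (rule power_int_decreasing) (use le sg_pos sg_lt1 in auto)
  also have "\<dots> \<le> W e c P" unfolding W_def
    by (rule member_le_sum) (use assms sg_pos Inv_def in auto)
  finally show False using assms(1) unfolding Inv_def by simp
qed

lemma Inv_init:
  assumes "finite P" "\<forall>i\<in>P. 1 \<le> e * (c - i)" "e = 1 \<or> e = -1"
  shows "Inv e c P"
proof -
  define f where "f i = nat (e * (c - i)) - 1" for i
  have inj: "inj_on f P"
  proof
    fix a b assume "a \<in> P" "b \<in> P" "f a = f b"
    moreover have "1 \<le> e * (c - a)" "1 \<le> e * (c - b)" using \<open>a \<in> P\<close> \<open>b \<in> P\<close> assms(2) by auto
    ultimately have "e * (c - a) = e * (c - b)" unfolding f_def by arith
    then show "a = b" using assms(3) by auto
  qed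
  define N where "N = Suc (Max (f ` P))"
  have N: "f ` P \<subseteq> {..<N}" unfolding N_def
    using Max_ge[OF finite_imageI[OF assms(1), of f]] by (auto simp: less_Suc_eq_le)
  have "W e c P = (\<Sum>i\<in>P. sg ^ (Suc (f i)))" unfolding W_def
  proof (rule sum.cong[OF refl])
    fix i assume "i \<in> P"
    then have "e * (c - i) = int (Suc (f i))" using assms(2) unfolding f_def by auto
    then show "sg powi (e * (c - i)) = sg ^ Suc (f i)" by (metis power_int_of_nat)
  qed
  also have "\<dots> = (\<Sum>k\<in>f ` P. sg ^ Suc k)" using sum.reindex[OF inj, of "\<lambda>k. sg ^ Suc k"] by simp
  also have "\<dots> \<le> (\<Sum>k<N. sg ^ Suc k)"
    by (rule sum_mono2) (use N sg_pos in auto)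
  also have "\<dots> = sg * (\<Sum>k<N. sg ^ k)" by (simp add: sum_distrib_left)
  also have "\<dots> = sg * ((1 - sg ^ N) / (1 - sg))" using sum_gp_strict[of sg N] sg_lt1 by simp
  also have "\<dots> = (1 - sg ^ N) / sg"
  proof -
    have "1 - sg = sg * sg" using sg_eq by simp
    then have "sg * ((1 - sg ^ N) / (1 - sg)) = sg * ((1 - sg ^ N) / (sg * sg))" by simp
    also have "\<dots> = (1 - sg ^ N) / sg" using sg_pos by (simp add: field_simps)
    finally show ?thesis .
  qed
  also have "\<dots> < 1 / sg" using sg_pos by (simp add: divide_strict_right_mono)
  finally show ?thesis unfolding Inv_def using assms(1) by simp
qed

definition Setup :: "int \<Rightarrow> int \<Rightarrow> position \<Rightarrow> position \<Rightarrow> position \<Rightarrow> bool" where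
  "Setup n r P M Q \<longleftrightarrow> Inv 1 n P \<and> Inv (-1) r Q \<and> n + 2 \<le> r \<and> finite M \<and>
     (\<forall>i\<in>M. n + 1 < i \<and> i + 1 < r \<and> i - 1 \<notin> M \<and> i + 1 \<notin> M)"

lemma Setup_facts:
  assumes "Setup n r P M Q"
  shows "\<And>k. k \<in> P \<Longrightarrow> k \<le> n" "\<And>k. k \<in> Q \<Longrightarrow> r \<le> k"
    "\<And>k. k \<in> M \<Longrightarrow> n + 1 < k \<and> k + 1 < r \<and> k - 1 \<notin> M \<and> k + 1 \<notin> M" "n + 2 \<le> r"
    "Inv 1 n P" "Inv (-1) r Q" "finite M"
proof -
  show "\<And>k. k \<in> P \<Longrightarrow> k \<le> n" using assms Inv_bound[of 1 n P] unfolding Setup_def by force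
  show "\<And>k. k \<in> Q \<Longrightarrow> r \<le> k" using assms Inv_bound[of "-1" r Q] unfolding Setup_def by force
qed (use assms Setup_def in auto)

lemma hop_comb_L:
  assumes "Setup n r P M Q" "hop P i j P'"
  shows "hop (P \<union> M \<union> Q) i j (P' \<union> M \<union> Q)"
proof -
  note F = Setup_facts[OF assms(1)]
  obtain d where d: "d = 1 \<or> d = -1" "i \<in> P" "i + d \<in> P" "i + 2*d \<notin> P" "j = i + 2*d"
    "P' = (P - {i, i + d}) \<union> {i + 2*d}" using assms(2) unfolding hop_def by blast
  have "Inv 1 n P'" using hop_Inv[OF assms(2) F(5)] by simp
  then have "i + 2*d \<le> n" using Inv_bound[of 1 n P' "i+2*d"] d(6) by simp
  have i: "i \<le> n" "i + d \<le> n" using F(1) d(2,3) by auto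
  have nM: "k \<le> n + 1 \<Longrightarrow> k \<notin> M" for k using F(3) by force
  have nQ: "k \<le> n + 1 \<Longrightarrow> k \<notin> Q" for k using F(2) F(4) by force
  show ?thesis unfolding hop_def
  proof (intro exI[of _ d] conjI)
    show "P' \<union> M \<union> Q = P \<union> M \<union> Q - {i, i + d} \<union> {i + 2 * d}"
      using d(6) nM[of i] nM[of "i+d"] nQ[of i] nQ[of "i+d"] i by auto
    show "i + 2 * d \<notin> P \<union> M \<union> Q"
      using d(4) nM[of "i+2*d"] nQ[of "i+2*d"] \<open>i + 2*d \<le> n\<close> by auto
  qed (use d in auto)
qed

lemma hop_comb_R:
  assumes "Setup n r P M Q" "hop Q i j Q'"
  shows "hop (P \<union> M \<union> Q) i j (P \<union> M \<union> Q')"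
proof -
  note F = Setup_facts[OF assms(1)]
  obtain d where d: "d = 1 \<or> d = -1" "i \<in> Q" "i + d \<in> Q" "i + 2*d \<notin> Q" "j = i + 2*d"
    "Q' = (Q - {i, i + d}) \<union> {i + 2*d}" using assms(2) unfolding hop_def by blast
  have "Inv (-1) r Q'" using hop_Inv[OF assms(2) F(6)] by simp
  then have "r \<le> i + 2*d" using Inv_bound[of "-1" r Q' "i+2*d"] d(6) by simp
  have i: "r \<le> i" "r \<le> i + d" using F(2) d(2,3) by auto
  have nM: "r - 1 \<le> k \<Longrightarrow> k \<notin> M" for k using F(3) by force
  have nP: "r - 1 \<le> k \<Longrightarrow> k \<notin> P" for k using F(1) F(4) by force
  show ?thesis unfolding hop_def
  proof (intro exI[of _ d] conjI)
    show "P \<union> M \<union> Q' = P \<union> M \<union> Q - {i, i + d} \<union> {i + 2 * d}"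
      using d(6) nM[of i] nM[of "i+d"] nP[of i] nP[of "i+d"] i by auto
    show "i + 2 * d \<notin> P \<union> M \<union> Q"
      using d(4) nM[of "i+2*d"] nP[of "i+2*d"] \<open>r \<le> i + 2*d\<close> by auto
  qed (use d in auto)
qed

lemma hop_comb_inv:
  assumes "Setup n r P M Q" "hop (P \<union> M \<union> Q) i j C'"
  shows "(\<exists>P'. hop P i j P' \<and> C' = P' \<union> M \<union> Q) \<or> (\<exists>Q'. hop Q i j Q' \<and> C' = P \<union> M \<union> Q')"
proof -
  note F = Setup_facts[OF assms(1)]
  obtain d where d: "d = 1 \<or> d = -1" "i \<in> P \<union> M \<union> Q" "i + d \<in> P \<union> M \<union> Q"
    "i + 2*d \<notin> P \<union> M \<union> Q" "j = i + 2*d"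
    "C' = (P \<union> M \<union> Q - {i, i + d}) \<union> {i + 2*d}" using assms(2) unfolding hop_def by blast
  have nM: "k \<le> n + 1 \<Longrightarrow> k \<notin> M" for k using F(3) by force
  have nQ: "k \<le> n + 1 \<Longrightarrow> k \<notin> Q" for k using F(2) F(4) by force
  have nM': "r - 1 \<le> k \<Longrightarrow> k \<notin> M" for k using F(3) by force
  have nP': "r - 1 \<le> k \<Longrightarrow> k \<notin> P" for k using F(1) F(4) by force
  consider "i \<in> P" | "i \<in> M" | "i \<in> Q" using d(2) by blast
  then show ?thesis
  proof cases
    case 1
    then have "i \<le> n" using F(1) by auto
    then have "i + d \<in> P" using d(1,3) nM[of "i+d"] nQ[of "i+d"] by auto
    have "hop P i j (P - {i, i + d} \<union> {i + 2*d})" unfolding hop_def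
      using d 1 \<open>i + d \<in> P\<close> by blast
    moreover have "C' = (P - {i, i + d} \<union> {i + 2*d}) \<union> M \<union> Q"
      using d(6) nM[of i] nQ[of i] nM[of "i+d"] nQ[of "i+d"] \<open>i \<le> n\<close> d(1) by auto
    ultimately show ?thesis by blast
  next
    case 2
    have "i + d \<notin> P \<union> M \<union> Q"
      using F(3)[OF 2] d(1) F(1) F(2) by force
    then show ?thesis using d(3) by blast
  next
    case 3
    then have "r \<le> i" using F(2) by auto
    then have "i + d \<in> Q" using d(1,3) nM'[of "i+d"] nP'[of "i+d"] by auto
    have "hop Q i j (Q - {i, i + d} \<union> {i + 2*d})" unfolding hop_def
      using d 3 \<open>i + d \<in> Q\<close> by blast
    moreover have "C' = P \<union> M \<union> (Q - {i, i + d} \<union> {i + 2*d})"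
      using d(6) nM'[of i] nP'[of i] nM'[of "i+d"] nP'[of "i+d"] \<open>r \<le> i\<close> d(1) by auto
    ultimately show ?thesis by blast
  qed
qed

lemma Setup_L: "Setup n r P M Q \<Longrightarrow> Inv 1 n P' \<Longrightarrow> Setup n r P' M Q"
  unfolding Setup_def by auto
lemma Setup_R: "Setup n r P M Q \<Longrightarrow> Inv (-1) r Q' \<Longrightarrow> Setup n r P M Q'"
  unfolding Setup_def by auto

lemma multihop_comb_L:
  "multihop P i P' \<Longrightarrow> Setup n r P M Q \<Longrightarrow> multihop (P \<union> M \<union> Q) i (P' \<union> M \<union> Q)"
proof (induction rule: multihop.induct)
  case (one P i j P') then show ?case using hop_comb_L multihop.one by blast
next
  case (more P i j P1 R)
  have "Setup n r P1 M Q" using Setup_L[OF more.prems] hop_Inv[OF more.hyps(1)] more.prems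
    unfolding Setup_def by auto
  then show ?case using more hop_comb_L multihop.more by blast
qed

lemma multihop_comb_R:
  "multihop Q i Q' \<Longrightarrow> Setup n r P M Q \<Longrightarrow> multihop (P \<union> M \<union> Q) i (P \<union> M \<union> Q')"
proof (induction rule: multihop.induct)
  case (one Q i j Q') then show ?case using hop_comb_R multihop.one by blast
next
  case (more Q i j Q1 R)
  have "Setup n r P M Q1" using Setup_R[OF more.prems] hop_Inv[OF more.hyps(1)] more.prems
    unfolding Setup_def by auto
  then show ?case using more hop_comb_R multihop.more by blast
qed

lemma multihop_comb_inv:
  "multihop C i C' \<Longrightarrow> C = P \<union> M \<union> Q \<Longrightarrow> Setup n r P M Q \<Longrightarrow>
   (\<exists>P'. multihop P i P' \<and> C' = P' \<union> M \<union> Q) \<or> (\<exists>Q'. multihop Q i Q' \<and> C' = P \<union> M \<union> Q')"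
proof (induction arbitrary: P Q rule: multihop.induct)
  case (one C i j C')
  then show ?case using hop_comb_inv[of n r P M Q i j C'] multihop.one by blast
next
  case (more C i j C1 C')
  note F = Setup_facts[OF more.prems(2)]
  from hop_comb_inv[of n r P M Q i j C1] more.hyps(1) more.prems
  consider (L) P1 where "hop P i j P1" "C1 = P1 \<union> M \<union> Q"
    | (R) Q1 where "hop Q i j Q1" "C1 = P \<union> M \<union> Q1" by blast
  then show ?case
  proof cases
    case L
    have S: "Setup n r P1 M Q" using Setup_L[OF more.prems(2) hop_Inv[OF L(1) F(5)]] by simp
    have jP: "j \<in> P1" using hop_basic[OF L(1)] F(5) Inv_def by blast
    from more.IH[OF L(2) S] show ?thesis
    proof
      assume "\<exists>P'. multihop P1 j P' \<and> C' = P' \<union> M \<union> Q"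
      then show ?thesis using L(1) multihop.more by blast
    next
      assume "\<exists>Q'. multihop Q j Q' \<and> C' = P1 \<union> M \<union> Q'"
      then have "j \<in> Q" using multihop_basic F(6) Inv_def by blast
      moreover have "j \<le> n" using Setup_facts(1)[OF S jP] .
      ultimately show ?thesis using F(2)[of j] F(4) by linarith
    qed
  next
    case R
    have S: "Setup n r P M Q1" using Setup_R[OF more.prems(2) hop_Inv[OF R(1) F(6)]] by simp
    have jQ: "j \<in> Q1" using hop_basic[OF R(1)] F(6) Inv_def by blast
    from more.IH[OF R(2) S] show ?thesis
    proof
      assume "\<exists>Q'. multihop Q1 j Q' \<and> C' = P \<union> M \<union> Q'"
      then show ?thesis using R(1) multihop.more by blast
    next
      assume "\<exists>P'. multihop P j P' \<and> C' = P' \<union> M \<union> Q1"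
      then have "j \<in> P" using multihop_basic F(5) Inv_def by blast
      moreover have "r \<le> j" using Setup_facts(2)[OF S jQ] .
      ultimately show ?thesis using F(1)[of j] F(4) by linarith
    qed
  qed
qed

lemma moves_comb:
  assumes "Setup n r P M Q"
  shows "moves v (P \<union> M \<union> Q) = (\<lambda>P'. P' \<union> M \<union> Q) ` moves v P \<union> (\<lambda>Q'. P \<union> M \<union> Q') ` moves v Q"
proof (cases v)
  case SingleHop
  show ?thesis
  proof (intro equalityI subsetI)
    fix C' assume "C' \<in> moves v (P \<union> M \<union> Q)"
    then obtain i j where "hop (P \<union> M \<union> Q) i j C'" using SingleHop unfolding moves_def by auto
    from hop_comb_inv[OF assms this] show "C' \<in> (\<lambda>P'. P' \<union> M \<union> Q) ` moves v P \<union> (\<lambda>Q'. P \<union> M \<union> Q') ` moves v Q"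
    proof
      assume "\<exists>P'. hop P i j P' \<and> C' = P' \<union> M \<union> Q"
      then obtain P' where "hop P i j P'" "C' = P' \<union> M \<union> Q" by blast
      moreover have "P' \<in> moves v P" using SingleHop \<open>hop P i j P'\<close> unfolding moves_def by auto
      ultimately show ?thesis by blast
    next
      assume "\<exists>Q'. hop Q i j Q' \<and> C' = P \<union> M \<union> Q'"
      then obtain Q' where "hop Q i j Q'" "C' = P \<union> M \<union> Q'" by blast
      moreover have "Q' \<in> moves v Q" using SingleHop \<open>hop Q i j Q'\<close> unfolding moves_def by auto
      ultimately show ?thesis by blast
    qed
  next
    fix C' assume "C' \<in> (\<lambda>P'. P' \<union> M \<union> Q) ` moves v P \<union> (\<lambda>Q'. P \<union> M \<union> Q') ` moves v Q"
    then show "C' \<in> moves v (P \<union> M \<union> Q)"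
    proof
      assume "C' \<in> (\<lambda>P'. P' \<union> M \<union> Q) ` moves v P"
      then obtain P' i j where "hop P i j P'" "C' = P' \<union> M \<union> Q" using SingleHop unfolding moves_def by auto
      then show ?thesis using SingleHop hop_comb_L[OF assms] unfolding moves_def by (simp, blast)
    next
      assume "C' \<in> (\<lambda>Q'. P \<union> M \<union> Q') ` moves v Q"
      then obtain Q' i j where "hop Q i j Q'" "C' = P \<union> M \<union> Q'" using SingleHop unfolding moves_def by auto
      then show ?thesis using SingleHop hop_comb_R[OF assms] unfolding moves_def by (simp, blast)
    qed
  qed
next
  case MultiHop
  show ?thesis
  proof (intro equalityI subsetI)
    fix C' assume "C' \<in> moves v (P \<union> M \<union> Q)"
    then obtain i where "multihop (P \<union> M \<union> Q) i C'" using MultiHop unfolding moves_def by auto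
    from multihop_comb_inv[OF this refl assms] show "C' \<in> (\<lambda>P'. P' \<union> M \<union> Q) ` moves v P \<union> (\<lambda>Q'. P \<union> M \<union> Q') ` moves v Q"
    proof
      assume "\<exists>P'. multihop P i P' \<and> C' = P' \<union> M \<union> Q"
      then obtain P' where "multihop P i P'" "C' = P' \<union> M \<union> Q" by blast
      moreover have "P' \<in> moves v P" using MultiHop \<open>multihop P i P'\<close> unfolding moves_def by auto
      ultimately show ?thesis by blast
    next
      assume "\<exists>Q'. multihop Q i Q' \<and> C' = P \<union> M \<union> Q'"
      then obtain Q' where "multihop Q i Q'" "C' = P \<union> M \<union> Q'" by blast
      moreover have "Q' \<in> moves v Q" using MultiHop \<open>multihop Q i Q'\<close> unfolding moves_def by auto
      ultimately show ?thesis by blast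
    qed
  next
    fix C' assume "C' \<in> (\<lambda>P'. P' \<union> M \<union> Q) ` moves v P \<union> (\<lambda>Q'. P \<union> M \<union> Q') ` moves v Q"
    then show "C' \<in> moves v (P \<union> M \<union> Q)"
    proof
      assume "C' \<in> (\<lambda>P'. P' \<union> M \<union> Q) ` moves v P"
      then obtain P' i where "multihop P i P'" "C' = P' \<union> M \<union> Q" using MultiHop unfolding moves_def by auto
      then show ?thesis using MultiHop multihop_comb_L[OF _ assms] unfolding moves_def by (simp, blast)
    next
      assume "C' \<in> (\<lambda>Q'. P \<union> M \<union> Q') ` moves v Q"
      then obtain Q' i where "multihop Q i Q'" "C' = P \<union> M \<union> Q'" using MultiHop unfolding moves_def by auto
      then show ?thesis using MultiHop multihop_comb_R[OF _ assms] unfolding moves_def by (simp, blast)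
    qed
  qed
qed

lemma grundy_comb:
  "Setup n r P M Q \<Longrightarrow> grundy v (P \<union> M \<union> Q) = grundy v P XOR grundy v Q"
proof (induction "card P + card Q" arbitrary: P Q rule: less_induct)
  case less
  note F = Setup_facts[OF less.prems]
  have fP: "finite P" and fQ: "finite Q" using F(5,6) Inv_def by auto
  have fC: "finite (P \<union> M \<union> Q)" using fP fQ F(7) by auto
  have 1: "grundy v ` (\<lambda>P'. P' \<union> M \<union> Q) ` moves v P = (\<lambda>s. s XOR grundy v Q) ` grundy v ` moves v P"
    unfolding image_image
  proof (rule image_cong[OF refl])
    fix P' assume a: "P' \<in> moves v P"
    have S: "Setup n r P' M Q" using Setup_L[OF less.prems moves_Inv[OF a F(5)]] by simp
    have "card P' < card P" using moves_basic[OF a fP] by simp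
    then show "grundy v (P' \<union> M \<union> Q) = grundy v P' XOR grundy v Q" using less.hyps S by simp
  qed
  have 2: "grundy v ` (\<lambda>Q'. P \<union> M \<union> Q') ` moves v Q = (\<lambda>t. grundy v P XOR t) ` grundy v ` moves v Q"
    unfolding image_image
  proof (rule image_cong[OF refl])
    fix Q' assume a: "Q' \<in> moves v Q"
    have S: "Setup n r P M Q'" using Setup_R[OF less.prems moves_Inv[OF a F(6)]] by simp
    have "card Q' < card Q" using moves_basic[OF a fQ] by simp
    then show "grundy v (P \<union> M \<union> Q') = grundy v P XOR grundy v Q'" using less.hyps S by simp
  qed
  have "grundy v (P \<union> M \<union> Q) = mex (grundy v ` moves v (P \<union> M \<union> Q))" by (rule grundy_eq[OF fC])
  also have "\<dots> = mex ((\<lambda>s. s XOR grundy v Q) ` grundy v ` moves v P \<union> (\<lambda>t. grundy v P XOR t) ` grundy v ` moves v Q)"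
    unfolding moves_comb[OF less.prems] image_Un 1 2 ..
  also have "\<dots> = grundy v P XOR grundy v Q"
    by (rule mex_xor) (use grundy_mex[OF fP] grundy_mex[OF fQ] in auto)
  finally show ?case .
qed

lemma word_pos_append: "word_pos (u @ w) = word_pos u \<union> sh (int (length u)) (word_pos w)"
proof (intro equalityI subsetI)
  fix i assume "i \<in> word_pos (u @ w)"
  then obtain k where k: "i = int k" "k < length u + length w" "(u @ w) ! k" unfolding word_pos_def by auto
  show "i \<in> word_pos u \<union> sh (int (length u)) (word_pos w)"
  proof (cases "k < length u")
    case True then show ?thesis using k by (auto simp: word_pos_def nth_append)
  next
    case False
    then have "w ! (k - length u)" "k - length u < length w" using k by (auto simp: nth_append)
    then have "int (k - length u) \<in> word_pos w" unfolding word_pos_def by blast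
    then show ?thesis using k False unfolding sh_def by (auto simp: image_iff intro!: bexI[of _ "int (k - length u)"])
  qed
next
  fix i assume "i \<in> word_pos u \<union> sh (int (length u)) (word_pos w)"
  then show "i \<in> word_pos (u @ w)"
  proof
    assume "i \<in> word_pos u"
    then obtain k where "i = int k" "k < length u" "u ! k" unfolding word_pos_def by auto
    then show ?thesis unfolding word_pos_def by (auto simp: nth_append intro!: exI[of _ k])
  next
    assume "i \<in> sh (int (length u)) (word_pos w)"
    then obtain k where "i = int (length u) + int k" "k < length w" "w ! k" unfolding word_pos_def sh_def by auto
    then show ?thesis unfolding word_pos_def by (auto simp: nth_append intro!: exI[of _ "length u + k"])
  qed
qed

lemma word_pos_noTrue: "True \<notin> set xs \<Longrightarrow> word_pos xs = {}"
  unfolding word_pos_def by (auto dest: nth_mem)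

lemma word_pos_False: "word_pos [False] = {}" "word_pos [] = {}" "word_pos [False, False] = {}"
  by (rule word_pos_noTrue; simp)+

lemma word_pos_FT: "word_pos [False, True] = {1}"
proof -
  have e: "(i < length [False, True] \<and> [False, True] ! i) \<longleftrightarrow> i = 1" for i :: nat
  proof (cases i)
    case (Suc j) then show ?thesis by (cases j) auto
  qed simp
  show ?thesis unfolding word_pos_def e by auto
qed

lemma word_pos_bounds: "i \<in> word_pos w \<Longrightarrow> 0 \<le> i \<and> i < int (length w)"
  unfolding word_pos_def by auto

lemma word_pos_finite: "finite (word_pos w)"
proof -
  have "word_pos w \<subseteq> int ` {..<length w}" unfolding word_pos_def by auto
  then show ?thesis using finite_subset by blast
qed

lemma sh_Un: "sh t (X \<union> Y) = sh t X \<union> sh t Y" unfolding sh_def by auto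
lemma sh_empty: "sh t {} = {}" unfolding sh_def by auto

lemma word_pos_mid: "i \<in> word_pos (concat (replicate m [False, True])) \<Longrightarrow> 0 \<le> i \<and> i < 2 * int m \<and> odd i"
proof (induction m arbitrary: i)
  case 0 then show ?case by (simp add: word_pos_def)
next
  case (Suc m)
  have "concat (replicate (Suc m) [False, True]) = [False, True] @ concat (replicate m [False, True])" by simp
  then have "i \<in> {1} \<union> sh 2 (word_pos (concat (replicate m [False, True])))"
    using Suc.prems word_pos_append[of "[False, True]"] word_pos_FT by simp
  then show ?case
  proof
    assume "i \<in> {1}" then show ?thesis by simp
  next
    assume "i \<in> sh 2 (word_pos (concat (replicate m [False, True])))"
    then obtain k where "i = 2 + k" "k \<in> word_pos (concat (replicate m [False, True]))" unfolding sh_def by auto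
    with Suc.IH[of k] show ?thesis by auto
  qed
qed

lemma length_mid: "length (concat (replicate m [False, True])) = 2 * m"
  by (induction m) auto

theorem lemma1:
  fixes v :: version and x y :: "bool list" and m :: nat
  shows "G v (x @ [False] @ concat (replicate m [False, True]) @ [False, False] @ y)
         = xor (G v (x @ [False])) (G v (False # y))"
proof -
  define n where "n = int (length x)"
  define r where "r = n + 2 * int m + 2"
  define A where "A = word_pos (x @ [False])"
  define Mc where "Mc = word_pos (concat (replicate m [False, True]))"
  define M where "M = sh (n + 1) Mc"
  define B where "B = word_pos (False # y)"
  have B: "B = sh 1 (word_pos y)" unfolding B_def using word_pos_append[of "[False]" y] word_pos_False by simp
  have FF: "word_pos ([False, False] @ y) = sh 2 (word_pos y)"
    using word_pos_append[of "[False, False]" y] word_pos_False by simp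
  have whole: "word_pos (x @ [False] @ concat (replicate m [False, True]) @ [False, False] @ y) = A \<union> M \<union> sh r B"
  proof -
    have "x @ [False] @ concat (replicate m [False, True]) @ [False, False] @ y
        = (x @ [False]) @ (concat (replicate m [False, True]) @ ([False, False] @ y))" by simp
    moreover have "word_pos ((x @ [False]) @ (concat (replicate m [False, True]) @ ([False, False] @ y)))
       = A \<union> sh (n + 1) (word_pos (concat (replicate m [False, True]) @ ([False, False] @ y)))"
      unfolding A_def n_def by (subst word_pos_append) (simp add: add.commute)
    moreover have "word_pos (concat (replicate m [False, True]) @ ([False, False] @ y))
       = Mc \<union> sh (2 * int m) (sh 2 (word_pos y))"
      unfolding Mc_def by (subst word_pos_append) (simp only: length_mid FF of_nat_mult of_nat_numeral)
    ultimately have "word_pos (x @ [False] @ concat (replicate m [False, True]) @ [False, False] @ y)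
       = A \<union> sh (n + 1) (Mc \<union> sh (2 * int m) (sh 2 (word_pos y)))" by simp
    also have "\<dots> = A \<union> M \<union> sh r B" unfolding M_def B r_def sh_Un by (simp add: algebra_simps Un_assoc)
    finally show ?thesis .
  qed
  have Aelts: "i \<in> A \<Longrightarrow> 0 \<le> i \<and> i < n" for i
  proof -
    assume "i \<in> A"
    then have "i \<in> word_pos x" unfolding A_def using word_pos_append[of x "[False]"] word_pos_False sh_empty by simp
    then show ?thesis using word_pos_bounds unfolding n_def by blast
  qed
  have Belts: "i \<in> sh r B \<Longrightarrow> r + 1 \<le> i" for i
    unfolding B sh_def using word_pos_bounds by fastforce
  have S: "Setup n r A M (sh r B)" unfolding Setup_def
  proof (intro conjI)
    show "Inv 1 n A"
    proof (rule Inv_init)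
      show "\<forall>i\<in>A. 1 \<le> 1 * (n - i)" using Aelts by force
    qed (use word_pos_finite A_def in auto)
    show "Inv (-1) r (sh r B)"
    proof (rule Inv_init)
      show "\<forall>i\<in>sh r B. 1 \<le> - 1 * (r - i)" using Belts by force
      show "finite (sh r B)" unfolding sh_def B_def using word_pos_finite by simp
    qed simp
    show "n + 2 \<le> r" unfolding r_def by simp
    show "finite M" unfolding M_def sh_def Mc_def using word_pos_finite by simp
    show "\<forall>i\<in>M. n + 1 < i \<and> i + 1 < r \<and> i - 1 \<notin> M \<and> i + 1 \<notin> M"
    proof
      fix i assume "i \<in> M"
      then obtain k where k: "i = n + 1 + k" "0 \<le> k \<and> k < 2 * int m \<and> odd k"
        unfolding M_def sh_def Mc_def using word_pos_mid by blast
      have "k \<noteq> 0" using k by auto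
      have nM: "j \<in> M \<Longrightarrow> odd (j - n - 1)" for j
        unfolding M_def sh_def Mc_def using word_pos_mid by fastforce
      have "\<not> odd (i - 1 - n - 1)" "\<not> odd (i + 1 - n - 1)" using k by auto
      then show "n + 1 < i \<and> i + 1 < r \<and> i - 1 \<notin> M \<and> i + 1 \<notin> M"
        using k nM[of "i - 1"] nM[of "i + 1"] \<open>k \<noteq> 0\<close> unfolding r_def by auto
    qed
  qed
  have "G v (x @ [False] @ concat (replicate m [False, True]) @ [False, False] @ y)
      = grundy v (A \<union> M \<union> sh r B)" unfolding G_def whole ..
  also have "\<dots> = grundy v A XOR grundy v (sh r B)" by (rule grundy_comb[OF S])
  also have "\<dots> = xor (G v (x @ [False])) (G v (False # y))"
    unfolding G_def A_def B_def grundy_shift ..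
  finally show ?thesis .
qed

end
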